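(* The system MaxSAT resolution $+$ cost-SR is sound: if from a MaxSAT instance with satisfiable hard clauses $H_0=\{C_1\lor b_1,\dots,C_m\lor b_m\}$ and soft clauses $S_0=\{\lnot b_1,\dots,\lnot b_m\}$ there is a MaxSAT resolution $+$ cost-SR derivation $(H_0,S_0),\dots,(H_t,S_t)$ such that $S_t$ contains the empty clause $\bot$ with multiplicity $k$, then every assignment satisfying $H_0$ falsifies at least $k$ clauses of $S_0$; equivalently $\mathrm{cost}(H_0)\ge k$.
   Context: $b_1,\dots,b_m$ are distinct blocking variables not occurring in $C_1,\dots,C_m$; $\mathrm{cost}(\alpha)=\sum_i\alpha(b_i)$, $\mathrm{cost}(H)=\min\{\mathrm{cost}(\alpha):\alpha\text{ total},\alpha\models H\}$. Notation: substitutions map variables to $0,1$ or literals ($\sigma(\lnot x)=\lnot\sigma(x)$); $(\sigma\circ\tau)(x)=\sigma(\tau(x))$; $C{\upharpoonright}_\sigma$ and $\Gamma{\upharpoonright}_\sigma$ denote restriction (clauses set to $1$ removed); $\lnot C$ is the partial assignment falsifying all literals of $C$; $\Gamma\vdash_1 C$ means unit propagation on $\Gamma{\upharpoonright}_{\lnot C}$ derives $\bot$, and $\Gamma\vdash_1\Delta$ means this for all $D\in\Delta$. $C$ is cost-SR w.r.t. $\Gamma$ if some substitution $\sigma$ satisfies (1) $\Gamma{\upharpoonright}_{\lnot C}\vdash_1(\Gamma\cup\{C\}){\upharpoonright}_\sigma$ and (2) $\mathrm{cost}(\tau\circ\sigma)\le\mathrm{cost}(\tau)$ for all total $\tau\supseteq\lnot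 C$. A MaxSAT resolution $+$ cost-SR derivation is a sequence of pairs of multisets $(H_i,S_i)$ where each step is one of: (a) $S_i=S_{i-1}$, $H_i=H_{i-1}\cup\{C\}$ with $C$ obtained by resolution (or weakening) from $H_{i-1}$; (a') $S_i=S_{i-1}$, $H_i=H_{i-1}\cup\{C\}$ with $C$ cost-SR w.r.t. $H_{i-1}$; (b) $S_i=S_{i-1}\cup\{C\}$ for some $C\in H_{i-1}$, $H_i=H_{i-1}$; (c) $S_i=S_{i-1}\setminus\{C\}\cup\{C\lor x,C\lor\lnot x\}$ for $C\in S_{i-1}$, $H_i=H_{i-1}$; (d) $S_i=S_{i-1}\setminus\{C\lor x,C\lor\lnot x\}\cup\{C\}$ for $\{C\lor x,C\lor\lnot x\}\subseteq S_{i-1}$, $H_i=H_{i-1}$. *)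

theory Defs
  imports "HOL-Library.Multiset"
begin

datatype 'v lit = Pos 'v | Neg 'v

fun lneg :: "'v lit \<Rightarrow> 'v lit" where
  "lneg (Pos x) = Neg x"
| "lneg (Neg x) = Pos x"

type_synonym 'v clause = "'v lit set"

fun lit_val :: "('v \<Rightarrow> bool) \<Rightarrow> 'v lit \<Rightarrow> bool" where
  "lit_val \<alpha> (Pos x) = \<alpha> x"
| "lit_val \<alpha> (Neg x) = (\<not> \<alpha> x)"

definition sat_clause :: "('v \<Rightarrow> bool) \<Rightarrow> 'v clause \<Rightarrow> bool" where
  "sat_clause \<alpha> C \<longleftrightarrow> (\<exists>l\<in>C. lit_val \<alpha> l)"

definition sat_mset :: "('v \<Rightarrow> bool) \<Rightarrow> 'v clause multiset \<Rightarrow> bool" where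
  "sat_mset \<alpha> F \<longleftrightarrow> (\<forall>C\<in>#F. sat_clause \<alpha> C)"

datatype 'v slit = Const bool | Lit "'v lit"

fun sneg :: "'v slit \<Rightarrow> 'v slit" where
  "sneg (Const b) = Const (\<not> b)"
| "sneg (Lit l) = Lit (lneg l)"

type_synonym 'v subst = "'v \<Rightarrow> 'v slit"

fun subst_lit :: "'v subst \<Rightarrow> 'v lit \<Rightarrow> 'v slit" where
  "subst_lit \<sigma> (Pos x) = \<sigma> x"
| "subst_lit \<sigma> (Neg x) = sneg (\<sigma> x)"

definition subst_sat :: "'v subst \<Rightarrow> 'v clause \<Rightarrow> bool" where
  "subst_sat \<sigma> C \<longleftrightarrow> (\<exists>l\<in>C. subst_lit \<sigma> l = Const True)"

definition subst_clause :: "'v subst \<Rightarrow> 'v clause \<Rightarrow> 'v clause" where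
  "subst_clause \<sigma> C = {l'. \<exists>l\<in>C. subst_lit \<sigma> l = Lit l'}"

definition restrict :: "'v clause set \<Rightarrow> 'v subst \<Rightarrow> 'v clause set" where
  "restrict \<Gamma> \<sigma> = {subst_clause \<sigma> D | D. D \<in> \<Gamma> \<and> \<not> subst_sat \<sigma> D}"

text \<open>The partial assignment \<open>\<not>C\<close> falsifying all literals of C, as a substitution
  (identity on variables not occurring in C).\<close>
definition negC :: "'v clause \<Rightarrow> 'v subst" where
  "negC C x = (if Pos x \<in> C then Const False else if Neg x \<in> C then Const True else Lit (Pos x))"

fun slit_val :: "('v \<Rightarrow> bool) \<Rightarrow> 'v slit \<Rightarrow> bool" where
  "slit_val \<tau> (Const b) = b"
| "slit_val \<tau> (Lit l) = lit_val \<tau> l"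

definition comp_assign :: "('v \<Rightarrow> bool) \<Rightarrow> 'v subst \<Rightarrow> ('v \<Rightarrow> bool)" where
  "comp_assign \<tau> \<sigma> = (\<lambda>x. slit_val \<tau> (\<sigma> x))"

definition extends_negC :: "('v \<Rightarrow> bool) \<Rightarrow> 'v clause \<Rightarrow> bool" where
  "extends_negC \<tau> C \<longleftrightarrow> (\<forall>l\<in>C. \<not> lit_val \<tau> l)"

inductive up_refutes :: "'v clause set \<Rightarrow> bool" where
  up_empty: "{} \<in> F \<Longrightarrow> up_refutes F"
| up_unit: "{l} \<in> F \<Longrightarrow> up_refutes (restrict F (negC {lneg l})) \<Longrightarrow> up_refutes F"

definition up_implies :: "'v clause set \<Rightarrow> 'v clause \<Rightarrow> bool" where
  "up_implies \<Gamma> D \<longleftrightarrow> up_refutes (restrict \<Gamma> (negC D))"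

text \<open>Blocking variables are \<open>b 0, \<dots>, b (m-1)\<close>.\<close>
definition cost_assign :: "(nat \<Rightarrow> 'v) \<Rightarrow> nat \<Rightarrow> ('v \<Rightarrow> bool) \<Rightarrow> nat" where
  "cost_assign b m \<alpha> = (\<Sum>i<m. if \<alpha> (b i) then 1 else 0)"

definition cost_hard :: "(nat \<Rightarrow> 'v) \<Rightarrow> nat \<Rightarrow> 'v clause multiset \<Rightarrow> nat" where
  "cost_hard b m H = (LEAST c. \<exists>\<alpha>. sat_mset \<alpha> H \<and> cost_assign b m \<alpha> = c)"

definition cost_SR :: "(nat \<Rightarrow> 'v) \<Rightarrow> nat \<Rightarrow> 'v clause multiset \<Rightarrow> 'v clause \<Rightarrow> bool" where
  "cost_SR b m \<Gamma> C \<longleftrightarrow> (\<exists>\<sigma>.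
     (\<forall>D\<in>restrict (set_mset \<Gamma> \<union> {C}) \<sigma>. up_implies (restrict (set_mset \<Gamma>) (negC C)) D) \<and>
     (\<forall>\<tau>. extends_negC \<tau> C \<longrightarrow> cost_assign b m (comp_assign \<tau> \<sigma>) \<le> cost_assign b m \<tau>))"

definition res_or_weak :: "'v clause multiset \<Rightarrow> 'v clause \<Rightarrow> bool" where
  "res_or_weak H C \<longleftrightarrow>
     (\<exists>D E x. D \<in># H \<and> E \<in># H \<and> Pos x \<in> D \<and> Neg x \<in> E \<and>
        C = (D - {Pos x}) \<union> (E - {Neg x})) \<or>
     (\<exists>D. D \<in># H \<and> D \<subseteq> C \<and> finite C)"

text \<open>One step of a MaxSAT resolution + cost-SR derivation, rules (a), (a'), (b), (c), (d).
  \<open>C \<or> x\<close> is \<open>insert (Pos x) C\<close>.\<close>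
definition deriv_step :: "(nat \<Rightarrow> 'v) \<Rightarrow> nat \<Rightarrow>
    'v clause multiset \<Rightarrow> 'v clause multiset \<Rightarrow> 'v clause multiset \<Rightarrow> 'v clause multiset \<Rightarrow> bool" where
  "deriv_step b m H S H' S' \<longleftrightarrow>
     (S' = S \<and> (\<exists>C. res_or_weak H C \<and> H' = add_mset C H)) \<or>
     (S' = S \<and> (\<exists>C. finite C \<and> cost_SR b m H C \<and> H' = add_mset C H)) \<or>
     (H' = H \<and> (\<exists>C. C \<in># H \<and> S' = add_mset C S)) \<or>
     (H' = H \<and> (\<exists>C x. C \<in># S \<and>
         S' = add_mset (insert (Pos x) C) (add_mset (insert (Neg x) C) (S - {#C#})))) \<or>
     (H' = H \<and> (\<exists>C x. {#insert (Pos x) C, insert (Neg x) C#} \<subseteq># S \<and>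
         S' = add_mset C (S - {#insert (Pos x) C, insert (Neg x) C#})))"

end

theory Submission
  imports Defs
begin

lemma lit_val_lneg[simp]: "lit_val a (lneg l) = (\<not> lit_val a l)"
  by (cases l) auto

lemma lit_comp: "lit_val (comp_assign \<tau> \<sigma>) l = slit_val \<tau> (subst_lit \<sigma> l)"
proof (cases l)
  case (Pos x) then show ?thesis by (simp add: comp_assign_def)
next
  case (Neg x) then show ?thesis
    by (cases "\<sigma> x") (auto simp: comp_assign_def)
qed

lemma negC_keep:
  assumes "\<forall>l\<in>E. \<not> lit_val a l" "lit_val a l0"
    "subst_lit (negC E) l0 \<noteq> Const True"
  shows "subst_lit (negC E) l0 = Lit l0"
  using assms by (cases l0) (auto simp: negC_def split: if_splits)

lemma restrict_sat:
  assumes "\<forall>D\<in>F. sat_clause a D" "\<forall>l\<in>E. \<not> lit_val a l"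
  shows "\<forall>D\<in>restrict F (negC E). sat_clause a D"
proof
  fix D assume "D \<in> restrict F (negC E)"
  then obtain D0 where D: "D = subst_clause (negC E) D0" "D0 \<in> F" "\<not> subst_sat (negC E) D0"
    unfolding restrict_def by blast
  then obtain l0 where l0: "l0 \<in> D0" "lit_val a l0" using assms(1) unfolding sat_clause_def by blast
  have "subst_lit (negC E) l0 \<noteq> Const True" using D(3) l0(1) unfolding subst_sat_def by blast
  then have "subst_lit (negC E) l0 = Lit l0" using negC_keep assms(2) l0(2) by blast
  then have "l0 \<in> D" using D(1) l0(1) unfolding subst_clause_def by blast
  then show "sat_clause a D" using l0(2) unfolding sat_clause_def by blast
qed

lemma up_sound: "up_refutes F \<Longrightarrow> \<forall>D\<in>F. sat_clause a D \<Longrightarrow> False"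
proof (induction rule: up_refutes.induct)
  case (up_empty F) then show ?case unfolding sat_clause_def by blast
next
  case (up_unit l F)
  then have "lit_val a l" unfolding sat_clause_def by auto
  then have "\<forall>D\<in>restrict F (negC {lneg l}). sat_clause a D"
    using restrict_sat[of F a "{lneg l}"] up_unit.prems by auto
  then show ?case using up_unit.IH by blast
qed

lemma sr_step:
  assumes sat: "sat_mset \<beta> H" and sr: "cost_SR b m H C"
  shows "\<exists>\<beta>'. sat_mset \<beta>' (add_mset C H) \<and> cost_assign b m \<beta>' \<le> cost_assign b m \<beta>"
proof (cases "sat_clause \<beta> C")
  case True then show ?thesis using sat by (auto simp: sat_mset_def)
next
  case False
  then have ext: "\<forall>l\<in>C. \<not> lit_val \<beta> l" unfolding sat_clause_def by blast
  obtain \<sigma> where s1: "\<forall>D\<in>restrict (set_mset H \<union> {C}) \<sigma>. up_implies (restrict (set_mset H) (negC C)) D"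
    and s2: "\<forall>\<tau>. extends_negC \<tau> C \<longrightarrow> cost_assign b m (comp_assign \<tau> \<sigma>) \<le> cost_assign b m \<tau>"
    using sr unfolding cost_SR_def by blast
  have H1: "\<forall>D\<in>restrict (set_mset H) (negC C). sat_clause \<beta> D"
    using restrict_sat[of "set_mset H" \<beta> C] sat ext by (auto simp: sat_mset_def)
  have "sat_clause (comp_assign \<beta> \<sigma>) D" if D: "D \<in> set_mset H \<union> {C}" for D
  proof (cases "subst_sat \<sigma> D")
    case True
    then obtain l where "l \<in> D" "subst_lit \<sigma> l = Const True" unfolding subst_sat_def by blast
    then show ?thesis unfolding sat_clause_def using lit_comp[of \<beta> \<sigma> l] by auto
  next
    case False
    define D' where "D' = subst_clause \<sigma> D"
    have "D' \<in> restrict (set_mset H \<union> {C}) \<sigma>" using D False unfolding restrict_def D'_def by blast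
    then have up: "up_refutes (restrict (restrict (set_mset H) (negC C)) (negC D'))"
      using s1 unfolding up_implies_def by blast
    have "sat_clause \<beta> D'"
    proof (rule ccontr)
      assume "\<not> sat_clause \<beta> D'"
      then have "\<forall>l\<in>D'. \<not> lit_val \<beta> l" unfolding sat_clause_def by blast
      then have "\<forall>E\<in>restrict (restrict (set_mset H) (negC C)) (negC D'). sat_clause \<beta> E"
        using restrict_sat H1 by blast
      then show False using up_sound up by blast
    qed
    then obtain l' l where "lit_val \<beta> l'" "l \<in> D" "subst_lit \<sigma> l = Lit l'"
      unfolding sat_clause_def D'_def subst_clause_def by blast
    then show ?thesis unfolding sat_clause_def using lit_comp[of \<beta> \<sigma> l] by auto
  qed
  then have "sat_mset (comp_assign \<beta> \<sigma>) (add_mset C H)" by (auto simp: sat_mset_def)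
  moreover have "cost_assign b m (comp_assign \<beta> \<sigma>) \<le> cost_assign b m \<beta>"
    using s2 ext unfolding extends_negC_def by blast
  ultimately show ?thesis by blast
qed

lemma res_sound:
  assumes "sat_mset \<beta> H" "res_or_weak H C" shows "sat_clause \<beta> C"
  using assms unfolding res_or_weak_def sat_mset_def sat_clause_def
  by (metis DiffI UnCI lit.distinct(1) lit_val.simps(1) lit_val.simps(2) singletonD subsetD)

definition fals :: "('v \<Rightarrow> bool) \<Rightarrow> 'v clause multiset \<Rightarrow> nat" where
  "fals a S = size (filter_mset (\<lambda>D. \<not> sat_clause a D) S)"

lemma fals_add[simp]: "fals a (add_mset C S) = (if sat_clause a C then 0 else 1) + fals a S"
  by (simp add: fals_def)

lemma fals_minus: "C \<in># S \<Longrightarrow> fals a S = (if sat_clause a C then 0 else 1) + fals a (S - {#C#})"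
  by (metis fals_add insert_DiffM)

lemma sat_ins: "sat_clause a (insert l C) = (lit_val a l \<or> sat_clause a C)"
  by (auto simp: sat_clause_def)


lemma fals_plus[simp]: "fals a (A + B) = fals a A + fals a B"
  by (simp add: fals_def)

lemma fals_sub: "A \<subseteq># S \<Longrightarrow> fals a S = fals a A + fals a (S - A)"
  by (metis fals_plus subset_mset.add_diff_inverse)

lemma fals_empty[simp]: "fals a {#} = 0"
  by (simp add: fals_def)

lemma fals_S0: "fals a (mset (map (\<lambda>i. {Neg (b i)}) [0..<n])) = (\<Sum>i<n. if a (b i) then 1 else 0)"
  by (induction n) (auto simp: sat_clause_def)

lemma count_le_size: "count M x \<le> size M"
  by (induction M) auto

lemma step_mono:
  assumes "deriv_step b m H S H' S'" "sat_mset \<beta> H'" shows "sat_mset \<beta> H"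
  using assms unfolding deriv_step_def sat_mset_def by auto

lemma step_fals:
  assumes "deriv_step b m H S H' S'" "sat_mset \<beta> H'" shows "fals \<beta> S' = fals \<beta> S"
proof -
  have sH: "sat_mset \<beta> H" using step_mono assms by blast
  consider (a) "S' = S"
    | (b) C where "C \<in># H" "S' = add_mset C S"
    | (c) C x where "C \<in># S" "S' = add_mset (insert (Pos x) C) (add_mset (insert (Neg x) C) (S - {#C#}))"
    | (d) C x where "{#insert (Pos x) C, insert (Neg x) C#} \<subseteq># S"
         "S' = add_mset C (S - {#insert (Pos x) C, insert (Neg x) C#})"
    using assms(1) unfolding deriv_step_def by blast
  then show ?thesis
  proof cases
    case a then show ?thesis by simp
  next
    case b then show ?thesis using sH by (auto simp: sat_mset_def)
  next
    case (c C x)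
    have "fals \<beta> S = (if sat_clause \<beta> C then 0 else 1) + fals \<beta> (S - {#C#})"
      using fals_minus c(1) by blast
    then show ?thesis using c(2) by (auto simp: sat_ins)
  next
    case (d C x)
    have "fals \<beta> S = fals \<beta> {#insert (Pos x) C, insert (Neg x) C#} + fals \<beta> (S - {#insert (Pos x) C, insert (Neg x) C#})"
      using fals_sub d(1) by blast
    then show ?thesis using d(2) by (auto simp: sat_ins)
  qed
qed

lemma step_cost:
  assumes "deriv_step b m H S H' S'" "sat_mset \<beta> H"
  shows "\<exists>\<beta>'. sat_mset \<beta>' H' \<and> cost_assign b m \<beta>' \<le> cost_assign b m \<beta>"
proof -
  consider (a) C where "res_or_weak H C" "H' = add_mset C H"
    | (a2) C where "cost_SR b m H C" "H' = add_mset C H"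
    | (b) "H' = H"
    using assms(1) unfolding deriv_step_def by blast
  then show ?thesis
  proof cases
    case (a C) then show ?thesis using res_sound assms(2) by (auto simp: sat_mset_def)
  next
    case (a2 C) then show ?thesis using sr_step assms(2) by blast
  next
    case b then show ?thesis using assms(2) by blast
  qed
qed

theorem theorem7p4:
  fixes C :: "nat \<Rightarrow> 'v clause" and b :: "nat \<Rightarrow> 'v" and m :: nat
    and H S :: "nat \<Rightarrow> 'v clause multiset" and t k :: nat
  assumes fin: "\<forall>i<m. finite (C i)"
    and b_inj: "inj_on b {..<m}"
    and b_fresh: "\<forall>i<m. \<forall>j<m. Pos (b i) \<notin> C j \<and> Neg (b i) \<notin> C j"
    and H0: "H 0 = mset (map (\<lambda>i. insert (Pos (b i)) (C i)) [0..<m])"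
    and S0: "S 0 = mset (map (\<lambda>i. {Neg (b i)}) [0..<m])"
    and H0_sat: "\<exists>\<alpha>. sat_mset \<alpha> (H 0)"
    and deriv: "\<forall>i<t. deriv_step b m (H i) (S i) (H (Suc i)) (S (Suc i))"
    and empty_k: "count (S t) {} = k"
  shows "(\<forall>\<alpha>. sat_mset \<alpha> (H 0) \<longrightarrow>
            k \<le> size (filter_mset (\<lambda>D. \<not> sat_clause \<alpha> D) (S 0)))
         \<and> k \<le> cost_hard b m (H 0)"
proof -
  have A: "\<forall>\<alpha>. sat_mset \<alpha> (H 0) \<longrightarrow> (\<exists>\<beta>. sat_mset \<beta> (H i) \<and> cost_assign b m \<beta> \<le> cost_assign b m \<alpha>)"
    if "i \<le> t" for i
    using that
  proof (induction i)
    case 0 then show ?case by blast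
  next
    case (Suc i)
    show ?case
    proof (intro allI impI)
      fix \<alpha> assume "sat_mset \<alpha> (H 0)"
      then obtain \<beta> where "sat_mset \<beta> (H i)" "cost_assign b m \<beta> \<le> cost_assign b m \<alpha>"
        using Suc by auto
      moreover have "deriv_step b m (H i) (S i) (H (Suc i)) (S (Suc i))" using deriv Suc.prems by auto
      ultimately show "\<exists>\<beta>. sat_mset \<beta> (H (Suc i)) \<and> cost_assign b m \<beta> \<le> cost_assign b m \<alpha>"
        using step_cost by (meson le_trans)
    qed
  qed
  have B: "\<forall>\<beta>. sat_mset \<beta> (H i) \<longrightarrow> fals \<beta> (S i) = fals \<beta> (S 0)" if "i \<le> t" for i
    using that
  proof (induction i)
    case 0 then show ?case by blast
  next
    case (Suc i)
    have st: "deriv_step b m (H i) (S i) (H (Suc i)) (S (Suc i))" using deriv Suc.prems by auto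
    show ?case
    proof (intro allI impI)
      fix \<beta> assume h: "sat_mset \<beta> (H (Suc i))"
      then have "sat_mset \<beta> (H i)" using step_mono st by blast
      then show "fals \<beta> (S (Suc i)) = fals \<beta> (S 0)"
        using Suc st h step_fals by (metis Suc_leD)
    qed
  qed
  have costfals: "fals a (S 0) = cost_assign b m a" for a
    unfolding S0 fals_S0 cost_assign_def by simp
  have main: "k \<le> cost_assign b m \<alpha>" if sa: "sat_mset \<alpha> (H 0)" for \<alpha>
  proof -
    obtain \<beta> where bt: "sat_mset \<beta> (H t)" "cost_assign b m \<beta> \<le> cost_assign b m \<alpha>"
      using A[of t] sa by auto
    have "k = count (filter_mset (\<lambda>D. \<not> sat_clause \<beta> D) (S t)) {}"
      using empty_k by (simp add: sat_clause_def)
    also have "\<dots> \<le> fals \<beta> (S t)" unfolding fals_def by (rule count_le_size)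
    also have "\<dots> = fals \<beta> (S 0)" using B[of t] bt by auto
    also have "\<dots> = cost_assign b m \<beta>" by (rule costfals)
    finally show ?thesis using bt(2) by simp
  qed
  have 1: "\<forall>\<alpha>. sat_mset \<alpha> (H 0) \<longrightarrow> k \<le> size (filter_mset (\<lambda>D. \<not> sat_clause \<alpha> D) (S 0))"
    using main costfals unfolding fals_def by metis
  have "\<exists>\<alpha>. sat_mset \<alpha> (H 0) \<and> cost_assign b m \<alpha> = cost_hard b m (H 0)"
  proof -
    obtain a where "sat_mset a (H 0)" using H0_sat by blast
    then have "\<exists>c. \<exists>\<alpha>. sat_mset \<alpha> (H 0) \<and> cost_assign b m \<alpha> = c" by blast
    from LeastI_ex[OF this] show ?thesis unfolding cost_hard_def by blast
  qed
  then have "k \<le> cost_hard b m (H 0)" using main by metis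
  with 1 show ?thesis by blast
qed

end
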